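(* Let $(\phi_n)_{n\ge1}$ be a sequence of inner functions satisfying $\phi_n(0) \neq 0$, and let $f_n = T(\phi_n)$. The following are equivalent: (a) the product $\prod_{n \geq 1} \phi_n(0)$ converges absolutely; (b) the product $\prod_{n \geq 1} \phi_n$ converges absolutely and locally uniformly on $\mathbb{D}$; (c) the product $\prod_{n \geq 1} f_n(0)$ converges absolutely; (d) the product $\prod_{n \geq 1} f_n$ converges absolutely and locally uniformly on $\mathbb{D}$.
   Context: $\mathbb{D}$ is the open unit disk. $T(z) = i\frac{1-iz}{1+iz}$, and $T(\phi)=T\circ\phi$ (it is implicitly assumed that no $\phi_n$ is the constant $i$, so that $f_n$ is defined). A product $\prod w_n$ of numbers converges absolutely if $\sum|1-w_n|<\infty$; a product of functions converges absolutely and locally uniformly on $\mathbb{D}$ if $\sum|1-w_n(z)|$ converges uniformly on compact subsets of $\mathbb{D}$. *)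

theory Defs
  imports "HOL-Analysis.Analysis"
begin

definition inner_function :: "(complex \<Rightarrow> complex) \<Rightarrow> bool" where
  "inner_function f \<longleftrightarrow>
     f holomorphic_on ball 0 1 \<and>
     (\<forall>z\<in>ball 0 1. norm (f z) \<le> 1) \<and>
     (AE \<theta> in lborel. \<theta> \<in> {0..2*pi} \<longrightarrow>
        (\<exists>L. norm L = 1 \<and> ((\<lambda>r. f (complex_of_real r * cis \<theta>)) \<longlongrightarrow> L) (at_left 1)))"

definition T :: "complex \<Rightarrow> complex" where
  "T z = \<i> * (1 - \<i> * z) / (1 + \<i> * z)"

definition abs_conv_prod :: "(nat \<Rightarrow> complex) \<Rightarrow> bool" where
  "abs_conv_prod w \<longleftrightarrow> summable (\<lambda>n. norm (1 - w n))"

definition abs_loc_unif_conv_prod :: "(nat \<Rightarrow> complex \<Rightarrow> complex) \<Rightarrow> bool" where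
  "abs_loc_unif_conv_prod w \<longleftrightarrow>
     (\<forall>K. compact K \<and> K \<subseteq> ball 0 1 \<longrightarrow>
        uniformly_convergent_on K (\<lambda>N z. \<Sum>n<N. norm (1 - w n z)))"

end

theory Submission imports Defs "HOL-Complex_Analysis.Complex_Analysis"
begin

lemma harnack_bound:
  fixes g :: "complex \<Rightarrow> complex"
  assumes hol: "g holomorphic_on ball 0 1" and bd: "\<And>z. z \<in> ball 0 1 \<Longrightarrow> norm (g z) \<le> 1"
    and z: "norm z \<le> r" and r: "r < 1"
  shows "(1 - r) * norm (1 - g z) \<le> (1 + r) * norm (1 - g 0)"
proof -
  have zb: "z \<in> ball 0 1" using z r by simp
  have r0: "0 \<le> r" using z norm_ge_zero order.trans by blast
  show ?thesis
  proof (cases "norm (g 0) = 1")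
    case True
    have "g constant_on ball 0 1"
      by (rule maximum_modulus_principle[OF hol _ _ _ order.refl, of 0]) (use bd True in auto)
    then have "g z = g 0" using zb unfolding constant_on_def by auto
    then show ?thesis using r0 by (simp add: mult_right_mono)
  next
    case False
    define a where "a = g 0"
    have a1: "norm a < 1" using False bd[of 0] a_def by force
    have lt: "norm (g w) < 1" if "w \<in> ball 0 1" for w
    proof (rule ccontr)
      assume "\<not> norm (g w) < 1"
      then have "norm (g w) = 1" using bd that by force
      have "g constant_on ball 0 1"
        by (rule maximum_modulus_principle[OF hol _ _ _ order.refl, of w]) (use bd that \<open>norm (g w) = 1\<close> in auto)
      then have "g 0 = g w" using that unfolding constant_on_def by force
      then show False using a1 a_def \<open>norm (g w) = 1\<close> by simp
    qed
    define h where "h = Moebius_function 0 a \<circ> g"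
    have hh: "h holomorphic_on ball 0 1"
      unfolding h_def
      by (rule holomorphic_on_compose_gen[OF hol Moebius_function_holomorphic[OF a1]]) (use lt in auto)
    have h0: "h 0 = 0" by (simp add: h_def a_def Moebius_function_eq_zero)
    have hlt: "norm (h w) < 1" if "norm w < 1" for w
      unfolding h_def o_def by (rule Moebius_function_norm_lt_1[OF a1 lt]) (use that in simp)
    have "norm (h z) \<le> norm z"
      by (rule Schwarz_Lemma(1)[OF hh h0 hlt]) (use zb in auto)
    then have hz: "norm (h z) \<le> r" using z by simp
    have den: "1 - cnj a * g z \<noteq> 0"
    proof
      assume "1 - cnj a * g z = 0"
      then have "norm (cnj a * g z) = 1" by (metis eq_iff_diff_eq_0 norm_one)
      moreover have "norm (cnj a * g z) < 1"
        using a1 lt[OF zb] by (simp add: norm_mult) (metis mult_strict_mono' norm_ge_zero mult_1_right)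
      ultimately show False by simp
    qed
    have hzdef: "h z = (g z - a) / (1 - cnj a * g z)"
      by (simp add: h_def Moebius_function_simple)
    have e1: "1 - g z = (1 - a) - h z * ((1 - cnj a) + cnj a * (1 - g z))"
      using den by (simp add: hzdef field_simps)
    have nc: "norm (1 - cnj a) = norm (1 - a)"
      by (metis complex_cnj_diff complex_cnj_one complex_mod_cnj)
    have "norm (1 - g z) \<le> norm (1 - a) + norm (h z) * (norm (1 - cnj a) + norm (cnj a) * norm (1 - g z))"
    proof -
      have "norm (1 - g z) \<le> norm (1 - a) + norm (h z * ((1 - cnj a) + cnj a * (1 - g z)))"
        by (subst e1) (rule norm_triangle_ineq4)
      also have "\<dots> \<le> norm (1 - a) + norm (h z) * (norm (1 - cnj a) + norm (cnj a) * norm (1 - g z))"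
        unfolding norm_mult[of "h z"]
        by (intro add_left_mono mult_left_mono) (auto intro: order_trans[OF norm_triangle_ineq] simp: norm_mult)
      finally show ?thesis .
    qed
    also have "\<dots> \<le> norm (1 - a) + r * (norm (1 - a) + 1 * norm (1 - g z))"
      using hz a1 nc r0 by (intro add_left_mono mult_mono add_left_mono mult_right_mono) (auto simp: mult_left_le_one_le)
    finally show ?thesis by (simp add: a_def algebra_simps)
  qed
qed

lemma one_minus_T: "1 + \<i> * w \<noteq> 0 \<Longrightarrow> 1 - T w = (1 - \<i>) * (1 - w) / (1 + \<i> * w)"
  by (simp add: T_def field_simps)

lemma norm_1mi: "norm (1 - \<i>) = sqrt 2"
  by (simp add: cmod_def)

lemma T_bound1:
  assumes "norm w \<le> 1" shows "norm (1 - w) \<le> 2 * norm (1 - T w)"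
proof (cases "1 + \<i> * w = 0")
  case True
  then have "w = \<i>" by (metis add.commute add_diff_cancel_right' diff_0 minus_unique mult.commute mult_minus_right i_squared mult_1_left complex_i_mult_minus)
  moreover have "sqrt 2 \<le> (2::real)" by (rule real_le_lsqrt) auto
  ultimately show ?thesis by (simp add: T_def norm_1mi)
next
  case False
  have "norm (1 + \<i> * w) \<le> 2"
    using norm_triangle_ineq[of 1 "\<i> * w"] assms by (simp add: norm_mult)
  moreover have "norm (1 - T w) = sqrt 2 * norm (1 - w) / norm (1 + \<i> * w)"
    using False by (simp add: one_minus_T norm_mult norm_divide norm_1mi)
  moreover have "sqrt 2 \<ge> 1" by simp
  ultimately show ?thesis using False
  proof -
    assume d2: "norm (1 + \<i> * w) \<le> 2" and eq: "norm (1 - T w) = sqrt 2 * norm (1 - w) / norm (1 + \<i> * w)"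
      and s: "sqrt 2 \<ge> 1"
    have dp: "norm (1 + \<i> * w) > 0" using False by simp
    have "norm (1 - w) * norm (1 + \<i> * w) \<le> norm (1 - w) * 2"
      by (rule mult_left_mono[OF d2]) simp
    also have "\<dots> \<le> 2 * (sqrt 2 * norm (1 - w))"
      using mult_right_mono[OF s, of "norm (1 - w)"] by simp
    finally have "norm (1 - w) \<le> 2 * (sqrt 2 * norm (1 - w)) / norm (1 + \<i> * w)"
      using dp by (simp add: le_divide_eq)
    then show ?thesis unfolding eq by simp
  qed
qed

lemma T_bound2:
  assumes "norm (1 - w) \<le> 1/2" shows "norm (1 - T w) \<le> 3 * norm (1 - w)"
proof -
  have eq: "1 + \<i> * w = (1 + \<i>) - \<i> * (1 - w)" by (simp add: algebra_simps)
  have n1: "norm (1 + \<i>) = sqrt 2" by (simp add: cmod_def)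
  have "norm (1 + \<i>) - norm (\<i> * (1 - w)) \<le> norm (1 + \<i> * w)"
    unfolding eq by (rule norm_triangle_ineq2)
  then have lb: "sqrt 2 - 1/2 \<le> norm (1 + \<i> * w)" using assms n1 by (simp add: norm_mult)
  have s2: "sqrt 2 \<ge> 1.4" by (rule real_le_rsqrt) (simp add: power2_eq_square)
  have s3: "sqrt 2 \<le> 1.5" by (rule real_le_lsqrt) (auto simp: power2_eq_square)
  have nz: "1 + \<i> * w \<noteq> 0" using lb s2 by auto
  have "norm (1 - T w) = sqrt 2 * norm (1 - w) / norm (1 + \<i> * w)"
    using nz by (simp add: one_minus_T norm_mult norm_divide norm_1mi)
  also have "\<dots> \<le> 3 * norm (1 - w)"
  proof -
    have dp: "norm (1 + \<i> * w) \<ge> 9/10" using lb s2 by simp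
    have "sqrt 2 * norm (1 - w) \<le> 3/2 * norm (1 - w)"
      using mult_right_mono[OF s3, of "norm (1 - w)"] by simp
    also have "\<dots> \<le> 3 * norm (1 - w) * (9/10)" by simp
    also have "\<dots> \<le> 3 * norm (1 - w) * norm (1 + \<i> * w)"
      by (rule mult_left_mono[OF dp]) simp
    finally show ?thesis using dp by (simp add: divide_le_eq)
  qed
  finally show ?thesis .
qed

lemma compact_radius:
  assumes "compact K" "K \<subseteq> ball (0::complex) 1"
  shows "\<exists>r. 0 \<le> r \<and> r < 1 \<and> (\<forall>z\<in>K. norm z \<le> r)"
proof (cases "K = {}")
  case True then show ?thesis by (intro exI[of _ 0]) auto
next
  case False
  obtain x where "x \<in> K" "\<forall>y\<in>K. norm y \<le> norm x"
    using continuous_attains_sup[OF assms(1) False, of norm] continuous_on_norm_id by blast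
  then show ?thesis using assms(2) by (intro exI[of _ "norm x"]) auto
qed

lemma unif_to_summable:
  assumes "abs_loc_unif_conv_prod w"
  shows "summable (\<lambda>n. norm (1 - w n 0))"
proof -
  have "uniformly_convergent_on {0} (\<lambda>N z. \<Sum>n<N. norm (1 - w n z))"
    using assms unfolding abs_loc_unif_conv_prod_def by auto
  from uniformly_convergent_imp_convergent[OF this, of 0]
  show ?thesis by (simp add: summable_iff_convergent)
qed

theorem lemma4p3:
  fixes \<phi> f :: "nat \<Rightarrow> complex \<Rightarrow> complex"
  assumes inner: "\<And>n. inner_function (\<phi> n)"
    and nz: "\<And>n. \<phi> n 0 \<noteq> 0"
    and not_i: "\<And>n. \<not> (\<forall>z\<in>ball 0 1. \<phi> n z = \<i>)"
    and f_def: "\<And>n z. f n z = T (\<phi> n z)"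
  shows "(abs_conv_prod (\<lambda>n. \<phi> n 0) \<longleftrightarrow> abs_loc_unif_conv_prod \<phi>)
       \<and> (abs_loc_unif_conv_prod \<phi> \<longleftrightarrow> abs_conv_prod (\<lambda>n. f n 0))
       \<and> (abs_conv_prod (\<lambda>n. f n 0) \<longleftrightarrow> abs_loc_unif_conv_prod f)"
proof -
  have hol: "\<And>n. \<phi> n holomorphic_on ball 0 1" and bd: "\<And>n z. z \<in> ball 0 1 \<Longrightarrow> norm (\<phi> n z) \<le> 1"
    using inner unfolding inner_function_def by auto
  have bound: "\<exists>C\<ge>0. \<forall>n. \<forall>z\<in>K. norm (1 - \<phi> n z) \<le> C * norm (1 - \<phi> n 0)"
    if K: "compact K" "K \<subseteq> ball 0 1" for K
  proof -
    obtain r where r: "0 \<le> r" "r < 1" "\<forall>z\<in>K. norm z \<le> r" using compact_radius[OF K] by blast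
    show ?thesis
    proof (intro exI[of _ "(1 + r) / (1 - r)"] conjI allI ballI)
      show "0 \<le> (1 + r) / (1 - r)" using r by simp
      fix n z assume "z \<in> K"
      have "(1 - r) * norm (1 - \<phi> n z) \<le> (1 + r) * norm (1 - \<phi> n 0)"
        by (rule harnack_bound[OF hol bd]) (use r \<open>z \<in> K\<close> in auto)
      then show "norm (1 - \<phi> n z) \<le> (1 + r) / (1 - r) * norm (1 - \<phi> n 0)"
        using r by (simp add: field_simps)
    qed
  qed
  define A where "A = summable (\<lambda>n. norm (1 - \<phi> n 0))"
  have AB: "abs_loc_unif_conv_prod \<phi>" if A unfolding abs_loc_unif_conv_prod_def
  proof (intro allI impI)
    fix K :: "complex set" assume K: "compact K \<and> K \<subseteq> ball 0 1"
    then obtain C where C: "C \<ge> 0" "\<forall>n. \<forall>z\<in>K. norm (1 - \<phi> n z) \<le> C * norm (1 - \<phi> n 0)"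
      using bound by blast
    show "uniformly_convergent_on K (\<lambda>N z. \<Sum>n<N. norm (1 - \<phi> n z))"
      by (rule Weierstrass_m_test'[where M="\<lambda>n. C * norm (1 - \<phi> n 0)"])
        (use C that A_def in \<open>auto intro: summable_mult\<close>)
  qed
  have AD: "abs_loc_unif_conv_prod f" if A unfolding abs_loc_unif_conv_prod_def
  proof (intro allI impI)
    fix K :: "complex set" assume K: "compact K \<and> K \<subseteq> ball 0 1"
    then obtain C where C: "C \<ge> 0" "\<forall>n. \<forall>z\<in>K. norm (1 - \<phi> n z) \<le> C * norm (1 - \<phi> n 0)"
      using bound by blast
    have "(\<lambda>n. C * norm (1 - \<phi> n 0)) \<longlonglongrightarrow> C * 0"
      by (intro tendsto_mult tendsto_const summable_LIMSEQ_zero) (use that A_def in auto)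
    then have ev: "eventually (\<lambda>n. C * norm (1 - \<phi> n 0) < 1/2) sequentially"
      by (intro order_tendstoD(2)) auto
    show "uniformly_convergent_on K (\<lambda>N z. \<Sum>n<N. norm (1 - f n z))"
    proof (rule Weierstrass_m_test'_ev[where M="\<lambda>n. 3 * (C * norm (1 - \<phi> n 0))"])
      show "summable (\<lambda>n. 3 * (C * norm (1 - \<phi> n 0)))"
        using that A_def by (intro summable_mult) auto
      show "\<forall>\<^sub>F n in sequentially. \<forall>z\<in>K. norm (norm (1 - f n z)) \<le> 3 * (C * norm (1 - \<phi> n 0))"
        using ev
      proof eventually_elim
        case (elim n)
        show ?case
        proof
          fix z assume "z \<in> K"
          have le: "norm (1 - \<phi> n z) \<le> C * norm (1 - \<phi> n 0)" using C \<open>z \<in> K\<close> by auto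
          have "norm (1 - f n z) \<le> 3 * norm (1 - \<phi> n z)"
            unfolding f_def by (rule T_bound2) (use le elim in auto)
          then show "norm (norm (1 - f n z)) \<le> 3 * (C * norm (1 - \<phi> n 0))" using le by simp
        qed
      qed
    qed
  qed
  have AC: "summable (\<lambda>n. norm (1 - f n 0))" if A
  proof (rule summable_comparison_test_ev[where g="\<lambda>n. 3 * norm (1 - \<phi> n 0)"])
    have "(\<lambda>n. norm (1 - \<phi> n 0)) \<longlonglongrightarrow> 0"
      by (rule summable_LIMSEQ_zero) (use that A_def in auto)
    then have ev: "eventually (\<lambda>n. norm (1 - \<phi> n 0) < 1/2) sequentially"
      by (intro order_tendstoD(2)) auto
    then show "eventually (\<lambda>n. norm (norm (1 - f n 0)) \<le> 3 * norm (1 - \<phi> n 0)) sequentially"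
      by eventually_elim (simp add: f_def T_bound2)
    show "summable (\<lambda>n. 3 * norm (1 - \<phi> n 0))" using that A_def by (intro summable_mult) auto
  qed
  have CA: A if "summable (\<lambda>n. norm (1 - f n 0))"
    unfolding A_def
  proof (rule summable_comparison_test_ev[where g="\<lambda>n. 2 * norm (1 - f n 0)"])
    show "eventually (\<lambda>n. norm (norm (1 - \<phi> n 0)) \<le> 2 * norm (1 - f n 0)) sequentially"
      using bd[of 0] by (intro always_eventually allI) (simp add: f_def T_bound1)
    show "summable (\<lambda>n. 2 * norm (1 - f n 0))" using that by (intro summable_mult) auto
  qed
  have BA: A if "abs_loc_unif_conv_prod \<phi>" using unif_to_summable[OF that] A_def by simp
  have DC: "summable (\<lambda>n. norm (1 - f n 0))" if "abs_loc_unif_conv_prod f"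
    using unif_to_summable[OF that] by simp
  show ?thesis unfolding abs_conv_prod_def A_def[symmetric]
    using AB AD AC CA BA DC by blast
qed

end
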